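(* Let $\mathcal{F}_2$ be the field of (locally) analytic functions of $(x,y)$, $X=\partial/\partial x$, $Y=\partial/\partial y$, and $\mathcal{F}_2((X))$ the skew field of formal pseudodifferential operators in $X$ with coefficients in $\mathcal{F}_2$. Let $u\in\mathcal{F}_2$ and $M=Y-X^{-1}\cdot u\in\mathcal{F}_2((X))[Y]$. Let $n\ge1$ be an integer and let $P\in\mathcal{F}_2((X))$ have order $n$ and satisfy $[P,M]=0$. If $R\in\mathcal{F}_2((X))$ satisfies $R^n=P$, then $[R,M]=0$.
   Context: $\mathcal{F}_2((X))$ consists of formal series $\sum_{i\ge0}p_{n-i}X^{n-i}$ with $p_j\in\mathcal{F}_2$, $n\in\mathbb{Z}$ (order $n$ if $p_n\neq0$), multiplied by the usual composition rule of pseudodifferential operators, $X^{k}\cdot a=\sum_{j\ge0}\binom{k}{j}a^{(j)}X^{k-j}$ ($a^{(j)}$ the $j$-th $x$-derivative, generalized binomial coefficients). $\mathcal{F}_2((X))[Y]$ is the ring of polynomials in $Y$ with coefficients in $\mathcal{F}_2((X))$, where $Y$ commutes with $X$ and $Y\cdot a=aY+\partial a/\partial y$ for $a\in\mathcal{F}_2$. $[A,B]=AB-BA$. *)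

theory Defs
  imports Main
begin

text \<open>Abstract differential field: a field of characteristic 0 with two commuting
derivations dx (= d/dx) and dy (= d/dy). The field F_2 of analytic functions in (x,y)
is such a field.\<close>

definition is_derivation :: "('a::field \<Rightarrow> 'a) \<Rightarrow> bool" where
  "is_derivation D \<longleftrightarrow> (\<forall>a b. D (a + b) = D a + D b) \<and> (\<forall>a b. D (a * b) = D a * b + a * D b)"

text \<open>Formal pseudodifferential operators in X: coefficient functions int => 'a
(coefficient of X^i), with support bounded above.\<close>

definition is_pdo :: "(int \<Rightarrow> 'a::zero) \<Rightarrow> bool" where
  "is_pdo A \<longleftrightarrow> (\<exists>N. \<forall>k>N. A k = 0)"

definition pdo_has_order :: "(int \<Rightarrow> 'a::zero) \<Rightarrow> int \<Rightarrow> bool" where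
  "pdo_has_order A n \<longleftrightarrow> A n \<noteq> 0 \<and> (\<forall>k>n. A k = 0)"

definition pdo_const :: "'a::zero \<Rightarrow> (int \<Rightarrow> 'a)" where
  "pdo_const a = (\<lambda>i. if i = 0 then a else 0)"

definition pdo_Xinv :: "int \<Rightarrow> 'a::{zero,one}" where
  "pdo_Xinv = (\<lambda>i. if i = -1 then 1 else 0)"

text \<open>Composition: (sum_i a_i X^i)(sum_j b_j X^j) = sum_{i,j,k} a_i binom(i,k) b_j^{(k)} X^{i+j-k}.\<close>

definition pdo_mult :: "('a::field_char_0 \<Rightarrow> 'a) \<Rightarrow> (int \<Rightarrow> 'a) \<Rightarrow> (int \<Rightarrow> 'a) \<Rightarrow> (int \<Rightarrow> 'a)" where
  "pdo_mult dx A B = (\<lambda>m. \<Sum>(i, k) \<in> {(i, k). A i \<noteq> 0 \<and> B (m + int k - i) \<noteq> 0}.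
      A i * (of_int i gchoose k) * (dx ^^ k) (B (m + int k - i)))"

definition pdo_pow :: "('a::field_char_0 \<Rightarrow> 'a) \<Rightarrow> (int \<Rightarrow> 'a) \<Rightarrow> nat \<Rightarrow> (int \<Rightarrow> 'a)" where
  "pdo_pow dx A n = ((pdo_mult dx A) ^^ n) (pdo_const 1)"

text \<open>Polynomials in Y with coefficients in F((X)): nat => (int => 'a), coefficient of Y^s.
Y commutes with X and Y a = a Y + a_y, hence
(A Y^p)(B Y^q) = sum_{r<=p} binom(p,r) A (d_y^r B) Y^{p+q-r}.\<close>

definition ypoly_mult :: "('a::field_char_0 \<Rightarrow> 'a) \<Rightarrow> ('a \<Rightarrow> 'a) \<Rightarrow>
    (nat \<Rightarrow> int \<Rightarrow> 'a) \<Rightarrow> (nat \<Rightarrow> int \<Rightarrow> 'a) \<Rightarrow> (nat \<Rightarrow> int \<Rightarrow> 'a)" where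
  "ypoly_mult dx dy A B = (\<lambda>s m. \<Sum>(p, q, r) \<in> {(p, q, r). r \<le> p \<and> p + q = s + r \<and>
        A p \<noteq> (\<lambda>_. 0) \<and> B q \<noteq> (\<lambda>_. 0)}.
      of_nat (p choose r) * pdo_mult dx (A p) (\<lambda>i. (dy ^^ r) (B q i)) m)"

definition ypoly_commutator :: "('a::field_char_0 \<Rightarrow> 'a) \<Rightarrow> ('a \<Rightarrow> 'a) \<Rightarrow>
    (nat \<Rightarrow> int \<Rightarrow> 'a) \<Rightarrow> (nat \<Rightarrow> int \<Rightarrow> 'a) \<Rightarrow> (nat \<Rightarrow> int \<Rightarrow> 'a)" where
  "ypoly_commutator dx dy A B = (\<lambda>s m. ypoly_mult dx dy A B s m - ypoly_mult dx dy B A s m)"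

definition ypoly_of_pdo :: "(int \<Rightarrow> 'a::zero) \<Rightarrow> (nat \<Rightarrow> int \<Rightarrow> 'a)" where
  "ypoly_of_pdo A = (\<lambda>s. if s = 0 then A else (\<lambda>_. 0))"

definition op_M :: "('a::field_char_0 \<Rightarrow> 'a) \<Rightarrow> 'a \<Rightarrow> (nat \<Rightarrow> int \<Rightarrow> 'a)" where
  "op_M dx u = (\<lambda>s m. if s = 1 then pdo_const 1 m
                      else if s = 0 then - pdo_mult dx pdo_Xinv (pdo_const u) m else 0)"

end

theory Submission
  imports Defs "HOL-Library.Groups_Big_Fun" "HOL-Computational_Algebra.Formal_Power_Series"
begin


definition bnd :: "(int \<Rightarrow> 'a::zero) \<Rightarrow> int \<Rightarrow> bool" where
  "bnd A a \<longleftrightarrow> (\<forall>k>a. A k = 0)"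

locale der =
  fixes D :: "'a::field_char_0 \<Rightarrow> 'a"
  assumes isd: "is_derivation D"
begin

lemma add: "D (a + b) = D a + D b" using isd unfolding is_derivation_def by blast
lemma mult: "D (a * b) = D a * b + a * D b" using isd unfolding is_derivation_def by blast
lemma zero[simp]: "D 0 = 0" using add[of 0 0] by simp
lemma neg: "D (- a) = - D a" using add[of a "-a"] by (simp add: add_eq_0_iff)
lemma diff: "D (a - b) = D a - D b" using add[of a "-b"] neg[of b] by simp
lemma one[simp]: "D 1 = 0" using mult[of 1 1] by simp
lemma sum: "D (sum f S) = (\<Sum>x\<in>S. D (f x))"
  by (induction S rule: infinite_finite_induct) (auto simp: add)
lemma of_nat[simp]: "D (of_nat n) = 0"
  by (induction n) (auto simp: add)
lemma of_int[simp]: "D (of_int n) = 0"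
  by (cases n rule: int_cases) (auto simp: neg diff)
lemma cmult: "D c = 0 \<Longrightarrow> D (c * x) = c * D x" by (simp add: mult)
lemma divc: assumes "D x = 0" "D y = 0" shows "D (x / y) = 0"
proof (cases "y = 0")
  case True then show ?thesis by simp
next
  case False
  have "D x = D ((x / y) * y)" using False by simp
  also have "\<dots> = D (x/y) * y" by (subst mult) (simp add: assms)
  finally have "D (x/y) * y = 0" using assms by simp
  then show ?thesis using False by simp
qed
lemma prodc: "(\<And>x. x \<in> S \<Longrightarrow> D (f x) = 0) \<Longrightarrow> D (prod f S) = 0"
  by (induction S rule: infinite_finite_induct) (auto simp: mult)
lemma gch[simp]: "D (of_int i gchoose k) = 0"
proof -
  have "D (\<Prod>j=0..<k. of_int i - of_nat j) = 0" by (rule prodc) (simp add: diff)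
  moreover have "D (fact k) = 0" by (metis of_nat[of "fact k"] of_nat_fact)
  ultimately show ?thesis unfolding gbinomial_prod_rev by (rule divc)
qed

lemma fp_zero[simp]: "(D^^k) 0 = 0" by (induction k) auto
lemma fp_add: "(D^^k) (a + b) = (D^^k) a + (D^^k) b" by (induction k) (auto simp: add)
lemma fp_neg: "(D^^k) (- a) = - (D^^k) a" by (induction k) (auto simp: neg)
lemma fp_diff: "(D^^k) (a - b) = (D^^k) a - (D^^k) b" by (induction k) (auto simp: diff)
lemma fp_sum: "(D^^k) (sum f S) = (\<Sum>x\<in>S. (D^^k) (f x))" by (induction k) (auto simp: sum)
lemma fp_cmult: "D c = 0 \<Longrightarrow> (D^^k) (c * x) = c * (D^^k) x" by (induction k) (auto simp: cmult)
lemma fp_one: "(D^^k) 1 = (if k = 0 then 1 else 0)" by (induction k) auto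

lemma leibniz: "(D^^n) (a * b) = (\<Sum>k\<le>n. of_nat (n choose k) * (D^^k) a * (D^^(n-k)) b)"
proof (induct n)
  case 0
  then show ?case by simp
next
  case (Suc n)
  have decomp: "{0..n+1} = {0} \<union> {n + 1} \<union> {1..n}" and decomp2: "{0..n} = {0} \<union> {1..n}"
    by auto
  have "(D^^(n+1)) (a*b) = D (\<Sum>k\<le>n. of_nat (n choose k) * (D^^k) a * (D^^(n-k)) b)"
    using Suc.hyps by simp
  also have "\<dots> = (\<Sum>k\<le>n. of_nat (n choose k) * (D^^(k+1)) a * (D^^(n-k)) b) +
      (\<Sum>k\<le>n. of_nat (n choose k) * (D^^k) a * (D^^(n - k + 1)) b)"
    by (simp add: sum mult add sum.distrib algebra_simps)
  also have "\<dots> = (\<Sum>k\<le>n. of_nat (n choose k) * (D^^k) a * (D^^(n + 1 - k)) b) +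
      (\<Sum>k=1..n+1. of_nat (n choose (k - 1)) * (D^^k) a * (D^^(n + 1 - k)) b)"
    by (simp add: atMost_atLeast0 sum.shift_bounds_cl_Suc_ivl Suc_diff_le field_simps del: sum.cl_ivl_Suc)
  also have "\<dots> = (D^^(n+1)) b * a +
      (\<Sum>k=1..n. of_nat (n choose k) * (D^^k) a * (D^^(n + 1 - k)) b) + ((D^^(n + 1)) a * b +
      (\<Sum>k=1..n. of_nat (n choose (k - 1)) * (D^^k) a * (D^^(n + 1 - k)) b))"
      using sum.nat_ivl_Suc' [of 1 n "\<lambda>k. of_nat (n choose (k-1)) * (D^^k) a * (D^^(n + 1 - k)) b"]
    by (simp add: sum.atLeast_Suc_atMost atMost_atLeast0)
  also have "\<dots> = (D^^(n + 1)) a * b + (D^^(n+1)) b * a +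
      (\<Sum>k=1..n. of_nat (n + 1 choose k) * (D^^k) a * (D^^(n + 1 - k)) b)"
    by (auto simp add: field_simps sum.distrib [symmetric] choose_reduce_nat)
  also have "\<dots> = (\<Sum>k\<le>n+1. of_nat (n + 1 choose k) * (D^^k) a * (D^^(n + 1 - k)) b)"
    using decomp by (simp add: atMost_atLeast0 field_simps)
  finally show ?case
    by simp
qed

end



lemma bnd_mono: "bnd A a \<Longrightarrow> a \<le> a' \<Longrightarrow> bnd A a'" unfolding bnd_def by auto
lemma bndD: "bnd A a \<Longrightarrow> A k \<noteq> 0 \<Longrightarrow> k \<le> a" unfolding bnd_def by force
lemma is_pdo_bnd: "is_pdo A \<longleftrightarrow> (\<exists>a. bnd A a)" unfolding is_pdo_def bnd_def by auto

context der begin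

abbreviation T where "T A B m i k \<equiv> A i * (of_int i gchoose k) * (D^^k) (B (m + int k - i))"

lemma supp_sub: assumes "bnd A a" "bnd B b"
  shows "{(i,k). A i \<noteq> 0 \<and> B (m + int k - i) \<noteq> 0} \<subseteq> {m-b..a} \<times> {..nat(a+b-m)}"
  using bndD[OF assms(1)] bndD[OF assms(2)] by fastforce

lemma supp_fin: assumes "bnd A a" "bnd B b"
  shows "finite {(i,k). A i \<noteq> 0 \<and> B (m + int k - i) \<noteq> 0}"
  by (rule finite_subset[OF supp_sub[OF assms]]) auto

lemma pm_gen:
  assumes "bnd A a" "bnd B b" "finite I" "finite K"
    and out: "\<And>i k. (i,k) \<notin> I \<times> K \<Longrightarrow> A i \<noteq> 0 \<Longrightarrow> B (m + int k - i) \<noteq> 0 \<Longrightarrow> T A B m i k = 0"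
  shows "pdo_mult D A B m = (\<Sum>i\<in>I. \<Sum>k\<in>K. T A B m i k)"
proof -
  let ?S = "{(i,k). A i \<noteq> 0 \<and> B (m + int k - i) \<noteq> 0}"
  have "pdo_mult D A B m = (\<Sum>(i,k)\<in>?S. T A B m i k)" unfolding pdo_mult_def by simp
  also have "\<dots> = (\<Sum>(i,k)\<in>?S \<inter> (I \<times> K). T A B m i k)"
    by (rule sum.mono_neutral_right) (use supp_fin[OF assms(1,2)] in \<open>auto simp del: mult_eq_0_iff intro!: out\<close>)
  also have "\<dots> = (\<Sum>(i,k)\<in>I \<times> K. T A B m i k)"
    by (rule sum.mono_neutral_left) (use assms(3,4) in auto)
  also have "\<dots> = (\<Sum>i\<in>I. \<Sum>k\<in>K. T A B m i k)"
    by (rule sum.cartesian_product[symmetric])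
  finally show ?thesis .
qed

lemma pm_box:
  assumes "bnd A a" "bnd B b" "lo \<le> m - b" "a \<le> hi" "a + b - m \<le> int N"
  shows "pdo_mult D A B m = (\<Sum>i\<in>{lo..hi}. \<Sum>k\<le>N. T A B m i k)"
  by (rule pm_gen[OF assms(1,2)]) (use bndD[OF assms(1)] bndD[OF assms(2)] assms(3-5) in force)+

lemma bnd_mult: assumes "bnd A a" "bnd B b" shows "bnd (pdo_mult D A B) (a + b)"
  unfolding bnd_def
proof (intro allI impI)
  fix m assume "a + b < m"
  then have e: "{(i,k). A i \<noteq> 0 \<and> B (m + int k - i) \<noteq> 0} = {}"
    using bndD[OF assms(1)] bndD[OF assms(2)] by fastforce
  show "pdo_mult D A B m = 0" unfolding pdo_mult_def e by simp
qed

lemma top_mult: assumes "bnd A a" "bnd B b" shows "pdo_mult D A B (a + b) = A a * B b"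
proof -
  have "pdo_mult D A B (a + b) = (\<Sum>i\<in>{a}. \<Sum>k\<in>{0}. T A B (a+b) i k)"
    by (rule pm_gen[OF assms]) (use bndD[OF assms(1)] bndD[OF assms(2)] in force)+
  then show ?thesis by simp
qed

lemma pm_std: assumes "bnd A a" "bnd B b"
  shows "pdo_mult D A B m = (\<Sum>i\<in>{m-b..a}. \<Sum>k\<le>nat(a+b-m). T A B m i k)"
  by (rule pm_box[OF assms]) auto

lemma mult_zero_l[simp]: "pdo_mult D (\<lambda>_. 0) B = (\<lambda>_. 0)" unfolding pdo_mult_def by simp
lemma mult_zero_r[simp]: "pdo_mult D A (\<lambda>_. 0) = (\<lambda>_. 0)" unfolding pdo_mult_def by simp

lemma bnd_const: "bnd (pdo_const c) 0" unfolding bnd_def pdo_const_def by auto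

lemma one_mult: assumes "bnd B b" shows "pdo_mult D (pdo_const 1) B m = B m"
proof -
  have "pdo_mult D (pdo_const 1) B m = (\<Sum>i\<in>{0}. \<Sum>k\<in>{0}. T (pdo_const 1) B m i k)"
    by (rule pm_gen[OF bnd_const assms]) (auto simp: pdo_const_def gbinomial_0_left split: if_splits)
  then show ?thesis by (simp add: pdo_const_def)
qed

lemma mult_one: assumes "bnd B b" shows "pdo_mult D B (pdo_const 1) m = B m"
proof -
  have "pdo_mult D B (pdo_const 1) m = (\<Sum>i\<in>{m}. \<Sum>k\<in>{0}. T B (pdo_const 1) m i k)"
    by (rule pm_gen[OF assms bnd_const]) (auto simp: pdo_const_def fp_one split: if_splits)
  then show ?thesis by (simp add: pdo_const_def)
qed

lemma mult_diff_l: assumes "bnd X a" "bnd Y a" "bnd B b"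
  shows "pdo_mult D (\<lambda>i. X i - Y i) B m = pdo_mult D X B m - pdo_mult D Y B m"
proof -
  have bXY: "bnd (\<lambda>i. X i - Y i) a" using assms unfolding bnd_def by auto
  show ?thesis
    unfolding pm_std[OF bXY assms(3)] pm_std[OF assms(1) assms(3)] pm_std[OF assms(2) assms(3)]
    by (simp add: sum_subtractf[symmetric] algebra_simps)
qed

lemma mult_diff_r: assumes "bnd X b" "bnd Y b" "bnd A a"
  shows "pdo_mult D A (\<lambda>i. X i - Y i) m = pdo_mult D A X m - pdo_mult D A Y m"
proof -
  have bXY: "bnd (\<lambda>i. X i - Y i) b" using assms unfolding bnd_def by auto
  show ?thesis
    unfolding pm_std[OF assms(3) bXY] pm_std[OF assms(3) assms(1)] pm_std[OF assms(3) assms(2)]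
    by (simp add: sum_subtractf[symmetric] algebra_simps fp_diff)
qed

end

locale der2 = dx: der D + dy: der E for D E :: "'a::field_char_0 \<Rightarrow> 'a" +
  assumes comm: "\<And>a. D (E a) = E (D a)"
begin

lemma fp_comm: "E ((D^^k) x) = (D^^k) (E x)"
  by (induction k) (auto simp: comm[symmetric])

lemma dy_mult: assumes "bnd A a" "bnd B b"
  shows "E (pdo_mult D A B m) = pdo_mult D (\<lambda>i. E (A i)) B m + pdo_mult D A (\<lambda>i. E (B i)) m"
proof -
  have bA: "bnd (\<lambda>i. E (A i)) a" and bB: "bnd (\<lambda>i. E (B i)) b"
    using assms unfolding bnd_def by auto
  show ?thesis
    unfolding dx.pm_std[OF assms] dx.pm_std[OF bA assms(2)] dx.pm_std[OF assms(1) bB]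
    by (simp add: dy.sum dy.mult fp_comm sum.distrib[symmetric] algebra_simps)
qed

end



lemma sq_tri:
  fixes \<psi> :: "nat \<Rightarrow> nat \<Rightarrow> 'a::comm_monoid_add"
  assumes z: "\<And>r l. N < r + l \<Longrightarrow> \<psi> r l = 0"
  shows "(\<Sum>r\<le>N. \<Sum>l\<le>N. \<psi> r l) = (\<Sum>q\<le>N. \<Sum>r\<le>q. \<psi> r (q - r))"
proof -
  have "(\<Sum>r\<le>N. \<Sum>l\<le>N. \<psi> r l) = (\<Sum>(r,l)\<in>{..N}\<times>{..N}. \<psi> r l)"
    by (rule sum.cartesian_product)
  also have "\<dots> = (\<Sum>(r,l)\<in>{(r,l). r + l \<le> N}. \<psi> r l)"
  proof (rule sum.mono_neutral_right)
    show "finite ({..N}\<times>{..N})" by simp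
    show "{(r,l). r + l \<le> N} \<subseteq> {..N}\<times>{..N}" by auto
    show "\<forall>x\<in>{..N}\<times>{..N} - {(r,l). r + l \<le> N}. (case x of (r,l) \<Rightarrow> \<psi> r l) = 0"
      using z by (auto simp: not_le) (meson leI)
  qed
  also have "\<dots> = (\<Sum>q\<le>N. \<Sum>r\<le>q. \<psi> r (q - r))"
    by (rule sum.triangle_reindex_eq)
  finally show ?thesis .
qed

lemma natpart:
  fixes Y :: "nat \<Rightarrow> nat \<Rightarrow> 'a::field_char_0" and i j :: int
  assumes z: "\<And>p q. N < p + q \<Longrightarrow> Y p q = 0"
  shows "(\<Sum>k\<le>N. \<Sum>l\<le>N. \<Sum>p\<le>k. (of_int i gchoose k) * (of_int j gchoose l) * of_nat (k choose p) * Y p (k - p + l))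
       = (\<Sum>p\<le>N. \<Sum>q\<le>N. (of_int i gchoose p) * (of_int (i + j - int p) gchoose q) * Y p q)"
proof -
  define h where "h p r = (\<Sum>l\<le>N. (of_int i gchoose p) * ((of_int i - of_nat p) gchoose r) * (of_int j gchoose l) * Y p (r + l))" for p r
  have tri: "(of_int i gchoose k) * of_nat (k choose p) = (of_int i gchoose p) * ((of_int i - of_nat p) gchoose (k - p))"
    if "p \<le> k" for k p :: nat
    by (metis binomial_gbinomial gbinomial_trinomial_revision that)
  have "(\<Sum>k\<le>N. \<Sum>l\<le>N. \<Sum>p\<le>k. (of_int i gchoose k) * (of_int j gchoose l) * of_nat (k choose p) * Y p (k - p + l))
      = (\<Sum>k\<le>N. \<Sum>p\<le>k. h p (k - p))"
    unfolding h_def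
    apply (rule sum.cong[OF refl])
    apply (subst sum.swap)
    apply (rule sum.cong[OF refl])
    apply (rule sum.cong[OF refl])
    apply (simp add: tri[symmetric])
    done
  also have "\<dots> = (\<Sum>p\<le>N. \<Sum>r\<le>N. h p r)"
    by (rule sq_tri[symmetric]) (simp add: h_def z)
  also have "\<dots> = (\<Sum>p\<le>N. \<Sum>q\<le>N. (of_int i gchoose p) * (of_int (i + j - int p) gchoose q) * Y p q)"
  proof (rule sum.cong[OF refl])
    fix p assume "p \<in> {..N}"
    have "(\<Sum>r\<le>N. h p r) = (\<Sum>q\<le>N. \<Sum>r\<le>q. (of_int i gchoose p) * ((of_int i - of_nat p) gchoose r) * (of_int j gchoose (q - r)) * Y p (r + (q - r)))"
      unfolding h_def by (rule sq_tri) (simp add: z)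
    also have "\<dots> = (\<Sum>q\<le>N. (of_int i gchoose p) * Y p q * (\<Sum>r\<le>q. ((of_int i - of_nat p) gchoose r) * (of_int j gchoose (q - r))))"
      by (rule sum.cong[OF refl]) (simp add: sum_distrib_left ac_simps)
    also have "\<dots> = (\<Sum>q\<le>N. (of_int i gchoose p) * (of_int (i + j - int p) gchoose q) * Y p q)"
    proof (rule sum.cong[OF refl])
      fix q
      have V: "(\<Sum>r\<le>q. ((of_int i - of_nat p) gchoose r) * (of_int j gchoose (q - r))) = (of_int (i + j - int p) :: 'a) gchoose q"
        unfolding atMost_atLeast0 gbinomial_Vandermonde by (simp add: algebra_simps)
      show "(of_int i gchoose p) * Y p q * (\<Sum>r\<le>q. ((of_int i - of_nat p) gchoose r) * (of_int j gchoose (q - r))) =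
         (of_int i gchoose p) * (of_int (i + j - int p) gchoose q) * Y p q"
        unfolding V by simp
    qed
    finally show "(\<Sum>r\<le>N. h p r) = (\<Sum>q\<le>N. (of_int i gchoose p) * (of_int (i + j - int p) gchoose q) * Y p q)" .
  qed
  finally show ?thesis .
qed

lemma sum_shift:
  fixes f :: "int \<Rightarrow> 'a::comm_monoid_add"
  assumes "finite T" "finite J" "\<And>t. t \<notin> T \<Longrightarrow> f t = 0" "\<And>j. j \<notin> J \<Longrightarrow> f (j + s) = 0"
  shows "(\<Sum>t\<in>T. f t) = (\<Sum>j\<in>J. f (j + s))"
proof -
  have "(\<Sum>t\<in>T. f t) = Sum_any f"
    by (rule Sum_any.expand_superset[symmetric]) (use assms in auto)
  also have "\<dots> = Sum_any (\<lambda>j. f (j + s))"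
    by (rule Sum_any.reindex_cong[of "\<lambda>j. j + s"]) (auto intro!: bij_betw_byWitness[where f'="\<lambda>j. j - s"])
  also have "\<dots> = (\<Sum>j\<in>J. f (j + s))"
    by (rule Sum_any.expand_superset) (use assms in auto)
  finally show ?thesis .
qed

lemma swap4: "(\<Sum>t\<in>T. \<Sum>q\<in>Q. \<Sum>i\<in>I. \<Sum>p\<in>P. f t q i p) = (\<Sum>i\<in>I. \<Sum>p\<in>P. \<Sum>t\<in>T. \<Sum>q\<in>Q. f t q i p)"
proof -
  have "(\<Sum>t\<in>T. \<Sum>q\<in>Q. \<Sum>i\<in>I. \<Sum>p\<in>P. f t q i p) = (\<Sum>t\<in>T. \<Sum>i\<in>I. \<Sum>q\<in>Q. \<Sum>p\<in>P. f t q i p)"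
    by (rule sum.cong[OF refl], rule sum.swap)
  also have "\<dots> = (\<Sum>t\<in>T. \<Sum>i\<in>I. \<Sum>p\<in>P. \<Sum>q\<in>Q. f t q i p)"
    by (rule sum.cong[OF refl], rule sum.cong[OF refl], rule sum.swap)
  also have "\<dots> = (\<Sum>i\<in>I. \<Sum>t\<in>T. \<Sum>p\<in>P. \<Sum>q\<in>Q. f t q i p)"
    by (rule sum.swap)
  also have "\<dots> = (\<Sum>i\<in>I. \<Sum>p\<in>P. \<Sum>t\<in>T. \<Sum>q\<in>Q. f t q i p)"
    by (rule sum.cong[OF refl], rule sum.swap)
  finally show ?thesis .
qed




context der begin

lemma fp_comp: "(D^^p) ((D^^q) x) = (D^^(p+q)) x" by (simp add: funpow_add)

lemma assoc:
  assumes bA: "bnd A a" and bB: "bnd B b" and bC: "bnd C c"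
  shows "pdo_mult D (pdo_mult D A B) C m = pdo_mult D A (pdo_mult D B C) m"
proof -
  define N where "N = nat (a+b+c-m)"
  define I where "I = {m-b-c..a}"
  define J where "J = {m-a-c..b}"
  define TT where "TT = {m-c..a+b}"
  define Y where "Y i j p q = A i * (D^^p) (B j) * (D^^q) (C (m + int p + int q - i - j))" for i j p q
  have N: "a+b+c-m \<le> int N" by (simp add: N_def)
  have Yz: "Y i j p q = 0" if "N < p + q" for i j p q
  proof (cases "A i = 0 \<or> B j = 0")
    case True then show ?thesis by (auto simp: Y_def)
  next
    case False
    then have "i \<le> a" "j \<le> b" using bndD[OF bA] bndD[OF bB] by auto
    then have "C (m + int p + int q - i - j) = 0" using bC N that unfolding bnd_def by auto
    then show ?thesis by (simp add: Y_def)
  qed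
  define W where "W = (\<Sum>i\<in>I. \<Sum>j\<in>J. \<Sum>p\<le>N. \<Sum>q\<le>N. (of_int i gchoose p) * (of_int (i+j-int p) gchoose q) * Y i j p q)"
  define \<Phi> where "\<Phi> t q i p = A i * (of_int i gchoose p) * (D^^p) (B (t + int p - i)) * (of_int t gchoose q) * (D^^q) (C (m + int q - t))" for t q i p
  have bAB: "bnd (pdo_mult D A B) (a+b)" by (rule bnd_mult[OF bA bB])
  have bBC: "bnd (pdo_mult D B C) (b+c)" by (rule bnd_mult[OF bB bC])
  have "pdo_mult D (pdo_mult D A B) C m = (\<Sum>t\<in>TT. \<Sum>q\<le>N. pdo_mult D A B t * (of_int t gchoose q) * (D^^q) (C (m + int q - t)))"
    unfolding TT_def by (rule pm_box[OF bAB bC]) (use N in auto)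
  also have "\<dots> = (\<Sum>t\<in>TT. \<Sum>q\<le>N. (\<Sum>i\<in>I. \<Sum>p\<le>N. A i * (of_int i gchoose p) * (D^^p) (B (t + int p - i))) * (of_int t gchoose q) * (D^^q) (C (m + int q - t)))"
  proof (rule sum.cong[OF refl])
    fix t assume "t \<in> TT"
    then have "pdo_mult D A B t = (\<Sum>i\<in>I. \<Sum>p\<le>N. A i * (of_int i gchoose p) * (D^^p) (B (t + int p - i)))"
      unfolding I_def TT_def by (intro pm_box[OF bA bB]) (use N in auto)
    then show "(\<Sum>q\<le>N. pdo_mult D A B t * (of_int t gchoose q) * (D^^q) (C (m + int q - t))) =
       (\<Sum>q\<le>N. (\<Sum>i\<in>I. \<Sum>p\<le>N. A i * (of_int i gchoose p) * (D^^p) (B (t + int p - i))) * (of_int t gchoose q) * (D^^q) (C (m + int q - t)))"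
      by simp
  qed
  also have "\<dots> = (\<Sum>t\<in>TT. \<Sum>q\<le>N. \<Sum>i\<in>I. \<Sum>p\<le>N. \<Phi> t q i p)"
    unfolding \<Phi>_def by (simp add: sum_distrib_right)
  also have "\<dots> = (\<Sum>i\<in>I. \<Sum>p\<le>N. \<Sum>t\<in>TT. \<Sum>q\<le>N. \<Phi> t q i p)"
    by (rule swap4)
  also have "\<dots> = (\<Sum>i\<in>I. \<Sum>p\<le>N. \<Sum>j\<in>J. \<Sum>q\<le>N. \<Phi> (j + (i - int p)) q i p)"
  proof (rule sum.cong[OF refl], rule sum.cong[OF refl])
    fix i p assume i: "i \<in> I" and p: "p \<in> {..N}"
    show "(\<Sum>t\<in>TT. \<Sum>q\<le>N. \<Phi> t q i p) = (\<Sum>j\<in>J. \<Sum>q\<le>N. \<Phi> (j + (i - int p)) q i p)"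
    proof (rule sum_shift[where s = "i - int p" and f = "\<lambda>t. \<Sum>q\<le>N. \<Phi> t q i p"])
      show "finite TT" "finite J" unfolding TT_def J_def by auto
      show "(\<Sum>q\<le>N. \<Phi> t q i p) = 0" if "t \<notin> TT" for t
      proof (rule sum.neutral, intro ballI)
        fix q assume "q \<in> {..N}"
        show "\<Phi> t q i p = 0"
        proof (cases "A i = 0")
          case False
          then have "i \<le> a" using bndD[OF bA] by auto
          then have "B (t + int p - i) = 0 \<or> C (m + int q - t) = 0"
            using that bB bC unfolding TT_def bnd_def by auto
          then show ?thesis by (auto simp: \<Phi>_def)
        qed (simp add: \<Phi>_def)
      qed
      show "(\<Sum>q\<le>N. \<Phi> (j + (i - int p)) q i p) = 0" if "j \<notin> J" for j
      proof (rule sum.neutral, intro ballI)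
        fix q assume "q \<in> {..N}"
        show "\<Phi> (j + (i - int p)) q i p = 0"
        proof (cases "A i = 0")
          case False
          then have "i \<le> a" using bndD[OF bA] by auto
          then have "B (j + (i - int p) + int p - i) = 0 \<or> C (m + int q - (j + (i - int p))) = 0"
            using that bB bC unfolding J_def bnd_def by auto
          then show ?thesis by (auto simp: \<Phi>_def)
        qed (simp add: \<Phi>_def)
      qed
    qed
  qed
  also have "\<dots> = (\<Sum>i\<in>I. \<Sum>j\<in>J. \<Sum>p\<le>N. \<Sum>q\<le>N. \<Phi> (j + (i - int p)) q i p)"
    by (rule sum.cong[OF refl], rule sum.swap)
  also have "\<dots> = W"
    unfolding W_def
    by (intro sum.cong refl) (simp add: \<Phi>_def Y_def algebra_simps)
  finally have L: "pdo_mult D (pdo_mult D A B) C m = W" .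
  define \<Psi> where "\<Psi> i k j l p = A i * (of_int i gchoose k) * (of_int j gchoose l) * of_nat (k choose p) * (D^^p) (B j) * (D^^(k-p+l)) (C (m + int k - i + int l - j))" for i k j l p
  have "pdo_mult D A (pdo_mult D B C) m = (\<Sum>i\<in>I. \<Sum>k\<le>N. A i * (of_int i gchoose k) * (D^^k) (pdo_mult D B C (m + int k - i)))"
    unfolding I_def by (rule pm_box[OF bA bBC]) (use N in auto)
  also have "\<dots> = (\<Sum>i\<in>I. \<Sum>k\<le>N. \<Sum>j\<in>J. \<Sum>l\<le>N. \<Sum>p\<le>k. \<Psi> i k j l p)"
  proof (rule sum.cong[OF refl], rule sum.cong[OF refl])
    fix i k assume i: "i \<in> I" and k: "k \<in> {..N}"
    show "A i * (of_int i gchoose k) * (D^^k) (pdo_mult D B C (m + int k - i)) = (\<Sum>j\<in>J. \<Sum>l\<le>N. \<Sum>p\<le>k. \<Psi> i k j l p)"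
    proof (cases "A i = 0")
      case True then show ?thesis by (simp add: \<Psi>_def)
    next
      case False
      then have "i \<le> a" using bndD[OF bA] by auto
      then have e: "pdo_mult D B C (m + int k - i) = (\<Sum>j\<in>J. \<Sum>l\<le>N. B j * (of_int j gchoose l) * (D^^l) (C (m + int k - i + int l - j)))"
        unfolding J_def by (intro pm_box[OF bB bC]) (use N in auto)
      have inner: "(D^^k) (B j * (of_int j gchoose l) * (D^^l) y) = (\<Sum>p\<le>k. (of_int j gchoose l) * of_nat (k choose p) * (D^^p) (B j) * (D^^(k-p+l)) y)" for j l y
      proof -
        have "(D^^k) (B j * (of_int j gchoose l) * (D^^l) y) = (D^^k) ((of_int j gchoose l) * (B j * (D^^l) y))"
          by (simp add: ac_simps)
        also have "\<dots> = (of_int j gchoose l) * (D^^k) (B j * (D^^l) y)"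
          by (rule fp_cmult) simp
        also have "\<dots> = (\<Sum>p\<le>k. (of_int j gchoose l) * of_nat (k choose p) * (D^^p) (B j) * (D^^(k-p+l)) y)"
          by (simp add: leibniz sum_distrib_left fp_comp ac_simps)
        finally show ?thesis .
      qed
      show ?thesis unfolding e fp_sum inner by (simp add: \<Psi>_def sum_distrib_left ac_simps)
    qed
  qed
  also have "\<dots> = (\<Sum>i\<in>I. \<Sum>j\<in>J. \<Sum>k\<le>N. \<Sum>l\<le>N. \<Sum>p\<le>k. \<Psi> i k j l p)"
    by (rule sum.cong[OF refl], rule sum.swap)
  also have "\<dots> = W"
    unfolding W_def
  proof (rule sum.cong[OF refl], rule sum.cong[OF refl])
    fix i j
    have "(\<Sum>k\<le>N. \<Sum>l\<le>N. \<Sum>p\<le>k. \<Psi> i k j l p) = (\<Sum>k\<le>N. \<Sum>l\<le>N. \<Sum>p\<le>k. (of_int i gchoose k) * (of_int j gchoose l) * of_nat (k choose p) * Y i j p (k - p + l))"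
      by (intro sum.cong refl) (simp add: \<Psi>_def Y_def algebra_simps)
    also have "\<dots> = (\<Sum>p\<le>N. \<Sum>q\<le>N. (of_int i gchoose p) * (of_int (i + j - int p) gchoose q) * Y i j p q)"
      by (rule natpart) (rule Yz)
    finally show "(\<Sum>k\<le>N. \<Sum>l\<le>N. \<Sum>p\<le>k. \<Psi> i k j l p) = (\<Sum>p\<le>N. \<Sum>q\<le>N. (of_int i gchoose p) * (of_int (i + j - int p) gchoose q) * Y i j p q)" .
  qed
  finally show ?thesis using L by simp
qed

end



lemma bnd_Xinv: "bnd (pdo_Xinv :: int \<Rightarrow> 'a::{zero,one}) (-1)" unfolding bnd_def pdo_Xinv_def by auto

lemma opM0: "op_M dx u 0 = (\<lambda>m. - pdo_mult dx pdo_Xinv (pdo_const u) m)" unfolding op_M_def by auto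
lemma opM1: "op_M dx u 1 = pdo_const 1" unfolding op_M_def by auto
lemma opM2: "p \<ge> 2 \<Longrightarrow> op_M dx u p = (\<lambda>_. 0)" unfolding op_M_def by auto

lemma exists_top:
  assumes "bnd A a" "A \<noteq> (\<lambda>_. 0)"
  shows "\<exists>t. bnd A t \<and> A t \<noteq> 0"
proof -
  obtain k0 where k0: "A k0 \<noteq> 0" using assms(2) by auto
  let ?S = "{k. k0 \<le> k \<and> k \<le> a \<and> A k \<noteq> 0}"
  have fin: "finite ?S" by (rule finite_subset[of _ "{k0..a}"]) auto
  have k0a: "k0 \<le> a" using bndD[OF assms(1) k0] .
  have ne: "k0 \<in> ?S" using k0 k0a by auto
  define t where "t = Max ?S"
  have "t \<in> ?S" unfolding t_def using fin ne by (intro Max_in) auto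
  moreover have "bnd A t" unfolding bnd_def
  proof (intro allI impI)
    fix k assume "t < k"
    show "A k = 0"
    proof (rule ccontr)
      assume "A k \<noteq> 0"
      then have "k \<le> a" using bndD[OF assms(1)] by auto
      moreover have "k0 \<le> k" using \<open>t < k\<close> \<open>t \<in> ?S\<close> by auto
      ultimately have "k \<in> ?S" using \<open>A k \<noteq> 0\<close> by auto
      then have "k \<le> t" unfolding t_def using fin by (intro Max_ge)
      then show False using \<open>t < k\<close> by simp
    qed
  qed
  ultimately show ?thesis by auto
qed

context der2 begin

definition dl :: "'a \<Rightarrow> (int \<Rightarrow> 'a) \<Rightarrow> (int \<Rightarrow> 'a)" where
  "dl u Q = (\<lambda>m. pdo_mult D Q (op_M D u 0) m - pdo_mult D (op_M D u 0) Q m - E (Q m))"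

lemma bnd_N: "bnd (op_M D u 0) (-1)"
proof -
  have "bnd (pdo_mult D pdo_Xinv (pdo_const u)) (-1 + 0)"
    by (rule dx.bnd_mult[OF bnd_Xinv dx.bnd_const])
  then show ?thesis unfolding opM0 bnd_def by auto
qed

lemma bnd_E: "bnd A a \<Longrightarrow> bnd (\<lambda>i. E (A i)) a" unfolding bnd_def by auto

lemma bnd_dl: assumes "bnd A a" shows "bnd (dl u A) a"
proof -
  have "bnd (pdo_mult D A (op_M D u 0)) (a + -1)" by (rule dx.bnd_mult[OF assms bnd_N])
  moreover have "bnd (pdo_mult D (op_M D u 0) A) (-1 + a)" by (rule dx.bnd_mult[OF bnd_N assms])
  ultimately show ?thesis using assms unfolding bnd_def dl_def by auto
qed

lemma dl_mult: assumes bA: "bnd A a" and bB: "bnd B b"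
  shows "dl u (pdo_mult D A B) m = pdo_mult D (dl u A) B m + pdo_mult D A (dl u B) m"
proof -
  let ?N = "op_M D u 0"
  have bN: "bnd ?N (-1)" by (rule bnd_N)
  have bAN: "bnd (pdo_mult D A ?N) a" using dx.bnd_mult[OF bA bN] by (rule bnd_mono) simp
  have bNA: "bnd (pdo_mult D ?N A) a" using dx.bnd_mult[OF bN bA] by (rule bnd_mono) simp
  have bEA: "bnd (\<lambda>i. E (A i)) a" by (rule bnd_E[OF bA])
  have bBN: "bnd (pdo_mult D B ?N) b" using dx.bnd_mult[OF bB bN] by (rule bnd_mono) simp
  have bNB: "bnd (pdo_mult D ?N B) b" using dx.bnd_mult[OF bN bB] by (rule bnd_mono) simp
  have bEB: "bnd (\<lambda>i. E (B i)) b" by (rule bnd_E[OF bB])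
  have bAmB: "bnd (\<lambda>i. pdo_mult D A ?N i - pdo_mult D ?N A i) a" using bAN bNA unfolding bnd_def by auto
  have bBmB: "bnd (\<lambda>i. pdo_mult D B ?N i - pdo_mult D ?N B i) b" using bBN bNB unfolding bnd_def by auto
  have 1: "pdo_mult D (dl u A) B m = pdo_mult D (pdo_mult D A ?N) B m - pdo_mult D (pdo_mult D ?N A) B m - pdo_mult D (\<lambda>i. E (A i)) B m"
    unfolding dl_def
    using dx.mult_diff_l[OF bAmB bEA bB, of m] dx.mult_diff_l[OF bAN bNA bB, of m] by simp
  have 2: "pdo_mult D A (dl u B) m = pdo_mult D A (pdo_mult D B ?N) m - pdo_mult D A (pdo_mult D ?N B) m - pdo_mult D A (\<lambda>i. E (B i)) m"
    unfolding dl_def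
    using dx.mult_diff_r[OF bBmB bEB bA, of m] dx.mult_diff_r[OF bBN bNB bA, of m] by simp
  have 3: "dl u (pdo_mult D A B) m = pdo_mult D A (pdo_mult D B ?N) m - pdo_mult D (pdo_mult D ?N A) B m
      - (pdo_mult D (\<lambda>i. E (A i)) B m + pdo_mult D A (\<lambda>i. E (B i)) m)"
    unfolding dl_def using dx.assoc[OF bA bB bN, of m] dx.assoc[OF bN bA bB, of m] dy_mult[OF bA bB, of m] by simp
  have 4: "pdo_mult D (pdo_mult D A ?N) B m = pdo_mult D A (pdo_mult D ?N B) m"
    by (rule dx.assoc[OF bA bN bB])
  show ?thesis unfolding 1 2 3 4 by simp
qed

end



context der2 begin

lemma fpE_zero: "(E^^r) 0 = 0" by (rule dy.fp_zero)

lemma ym_left: "ypoly_mult D E (ypoly_of_pdo Q) B s m = pdo_mult D Q (B s) m"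
proof (cases "Q = (\<lambda>_. 0) \<or> B s = (\<lambda>_. 0)")
  case True
  then have e: "{(p, q, r). r \<le> p \<and> p + q = s + r \<and> ypoly_of_pdo Q p \<noteq> (\<lambda>_. 0) \<and> B q \<noteq> (\<lambda>_. 0)} = {}"
    unfolding ypoly_of_pdo_def by (auto split: if_splits)
  show ?thesis using True unfolding ypoly_mult_def e by auto
next
  case False
  then have e: "{(p, q, r). r \<le> p \<and> p + q = s + r \<and> ypoly_of_pdo Q p \<noteq> (\<lambda>_. 0) \<and> B q \<noteq> (\<lambda>_. 0)} = {(0, s, 0)}"
    unfolding ypoly_of_pdo_def by (auto split: if_splits)
  show ?thesis unfolding ypoly_mult_def e by (simp add: ypoly_of_pdo_def)
qed

lemma ym_M: "ypoly_mult D E (op_M D u) (ypoly_of_pdo Q) s m =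
   (if s = 0 then pdo_mult D (op_M D u 0) Q m + pdo_mult D (pdo_const 1) (\<lambda>i. E (Q i)) m
    else if s = 1 then pdo_mult D (pdo_const 1) Q m else 0)"
proof -
  let ?S = "{(p, q, r). r \<le> p \<and> p + q = s + r \<and> op_M D u p \<noteq> (\<lambda>_. 0) \<and> ypoly_of_pdo Q q \<noteq> (\<lambda>_. 0)}"
  let ?f = "\<lambda>(p, q, r). of_nat (p choose r) * pdo_mult D (op_M D u p) (\<lambda>i. (E ^^ r) (ypoly_of_pdo Q q i)) m"
  define F where "F = (if s = 0 then {(0,0,0),(1,0,1)} else if s = 1 then {(1::nat,0::nat,0::nat)} else {})"
  have sub: "?S \<subseteq> F"
  proof
    fix x assume "x \<in> ?S"
    then obtain p q r where x: "x = (p,q,r)" "r \<le> p" "p + q = s + r" "op_M D u p \<noteq> (\<lambda>_. 0)" "ypoly_of_pdo Q q \<noteq> (\<lambda>_. 0)"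
      by auto
    have "q = 0" using x(5) unfolding ypoly_of_pdo_def by (auto split: if_splits)
    moreover have "p < 2" using x(4) opM2[of p D u] by (cases "p \<ge> 2") auto
    ultimately show "x \<in> F" using x unfolding F_def by auto
  qed
  have z: "?f x = 0" if "x \<in> F - ?S" for x
  proof -
    obtain p q r where x: "x = (p,q,r)" by (cases x)
    have "x \<in> F" using that by auto
    then have "r \<le> p" "p + q = s + r" unfolding F_def x by (auto split: if_splits)
    then have "op_M D u p = (\<lambda>_. 0) \<or> ypoly_of_pdo Q q = (\<lambda>_. 0)" using that x by auto
    then show ?thesis unfolding x by (auto simp: fpE_zero)
  qed
  have "ypoly_mult D E (op_M D u) (ypoly_of_pdo Q) s m = sum ?f ?S" unfolding ypoly_mult_def by simp
  also have "\<dots> = sum ?f F"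
    by (rule sum.mono_neutral_left) (use sub z in \<open>auto simp: F_def\<close>)
  also have "\<dots> = (if s = 0 then pdo_mult D (op_M D u 0) Q m + pdo_mult D (pdo_const 1) (\<lambda>i. E (Q i)) m
    else if s = 1 then pdo_mult D (pdo_const 1) Q m else 0)"
    unfolding F_def by (simp add: opM1[simplified] ypoly_of_pdo_def)
  finally show ?thesis .
qed

lemma comm_eq: assumes "bnd Q q"
  shows "ypoly_commutator D E (ypoly_of_pdo Q) (op_M D u) = (\<lambda>s m. if s = 0 then dl u Q m else 0)"
proof (intro ext)
  fix s m
  have bEQ: "bnd (\<lambda>i. E (Q i)) q" by (rule bnd_E[OF assms])
  show "ypoly_commutator D E (ypoly_of_pdo Q) (op_M D u) s m = (if s = 0 then dl u Q m else 0)"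
    unfolding ypoly_commutator_def ym_left ym_M
    using dx.one_mult[OF bEQ] dx.one_mult[OF assms] dx.mult_one[OF assms] opM1[of D u] opM2[of s D u]
    by (auto simp: dl_def)
qed

end



context der2 begin

lemma dl_zero: "dl u (\<lambda>_. 0) = (\<lambda>_. 0)" unfolding dl_def by simp

lemma pow_Suc: "pdo_pow D R (Suc j) = pdo_mult D R (pdo_pow D R j)"
  unfolding pdo_pow_def by simp

lemma key:
  assumes bR: "bnd R r0" and n: "n \<ge> 1" and P0: "dl u (pdo_pow D R n) = (\<lambda>_. 0)"
  shows "dl u R = (\<lambda>_. 0)"
proof (rule ccontr)
  assume ne: "dl u R \<noteq> (\<lambda>_. 0)"
  then have "R \<noteq> (\<lambda>_. 0)" using dl_zero by auto
  then obtain \<rho> where b\<rho>: "bnd R \<rho>" and r: "R \<rho> \<noteq> 0" using exists_top[OF bR] by auto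
  obtain e where be: "bnd (dl u R) e" and c: "dl u R e \<noteq> 0"
    using exists_top[OF bnd_dl[OF bR] ne] by auto
  let ?Q = "pdo_pow D R"
  have C1: "bnd (?Q j) (int j * \<rho>) \<and> ?Q j (int j * \<rho>) = R \<rho> ^ j" for j
  proof (induction j)
    case 0
    then show ?case by (simp add: pdo_pow_def bnd_def pdo_const_def)
  next
    case (Suc j)
    have e: "int (Suc j) * \<rho> = \<rho> + int j * \<rho>" by (simp add: algebra_simps)
    show ?case unfolding pow_Suc e
      using dx.bnd_mult[OF b\<rho> Suc.IH[THEN conjunct1]] dx.top_mult[OF b\<rho> Suc.IH[THEN conjunct1]] Suc.IH
      by simp
  qed
  have Q1: "?Q 1 = R" using dx.mult_one[OF bR] by (auto simp: pow_Suc pdo_pow_def)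
  have C2: "bnd (dl u (?Q (Suc j))) (e + int j * \<rho>) \<and> dl u (?Q (Suc j)) (e + int j * \<rho>) = of_nat (Suc j) * R \<rho> ^ j * dl u R e" for j
  proof (induction j)
    case 0
    then show ?case using Q1 be by simp
  next
    case (Suc j)
    have bQ: "bnd (?Q (Suc j)) (int (Suc j) * \<rho>)" using C1 by blast
    have eq: "dl u (?Q (Suc (Suc j))) = (\<lambda>m. pdo_mult D (dl u R) (?Q (Suc j)) m + pdo_mult D R (dl u (?Q (Suc j))) m)"
      unfolding pow_Suc[of R "Suc j"] by (rule ext, rule dl_mult[OF b\<rho> bQ])
    have b1: "bnd (pdo_mult D (dl u R) (?Q (Suc j))) (e + int (Suc j) * \<rho>)" by (rule dx.bnd_mult[OF be bQ])
    have b2: "bnd (pdo_mult D R (dl u (?Q (Suc j)))) (\<rho> + (e + int j * \<rho>))" by (rule dx.bnd_mult[OF b\<rho> Suc.IH[THEN conjunct1]])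
    have ee: "\<rho> + (e + int j * \<rho>) = e + int (Suc j) * \<rho>" by (simp add: algebra_simps)
    have t1: "pdo_mult D (dl u R) (?Q (Suc j)) (e + int (Suc j) * \<rho>) = dl u R e * R \<rho> ^ Suc j"
      using dx.top_mult[OF be bQ] C1[of "Suc j"] by simp
    have t2: "pdo_mult D R (dl u (?Q (Suc j))) (e + int (Suc j) * \<rho>) = R \<rho> * (of_nat (Suc j) * R \<rho> ^ j * dl u R e)"
      using dx.top_mult[OF b\<rho> Suc.IH[THEN conjunct1]] Suc.IH ee by simp
    show ?case
    proof
      show "bnd (dl u (?Q (Suc (Suc j)))) (e + int (Suc j) * \<rho>)"
        using b1 b2 unfolding eq ee bnd_def by simp
      show "dl u (?Q (Suc (Suc j))) (e + int (Suc j) * \<rho>) = of_nat (Suc (Suc j)) * R \<rho> ^ Suc j * dl u R e"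
        unfolding eq t1 t2 by (simp add: algebra_simps)
    qed
  qed
  obtain j where nj: "n = Suc j" using n by (cases n) auto
  have "dl u (?Q n) (e + int j * \<rho>) = of_nat n * R \<rho> ^ j * dl u R e" using C2[of j] nj by simp
  moreover have "(of_nat n :: 'a) \<noteq> 0" using n by simp
  then have "of_nat n * R \<rho> ^ j * dl u R e \<noteq> (0::'a)" using r c by simp
  ultimately show False using P0 by simp
qed

end

theorem lemma2:
  fixes dx dy :: "'a::field_char_0 \<Rightarrow> 'a" and u :: 'a
    and P R :: "int \<Rightarrow> 'a" and n :: nat
  assumes "is_derivation dx" and "is_derivation dy" and "\<And>a. dx (dy a) = dy (dx a)"
    and "n \<ge> 1"
    and "is_pdo P" and "pdo_has_order P (int n)"
    and "ypoly_commutator dx dy (ypoly_of_pdo P) (op_M dx u) = (\<lambda>_ _. 0)"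
    and "is_pdo R" and "pdo_pow dx R n = P"
  shows "ypoly_commutator dx dy (ypoly_of_pdo R) (op_M dx u) = (\<lambda>_ _. 0)"
proof -
  interpret d: der2 dx dy
    by (intro der2.intro der.intro der2_axioms.intro) (use assms(1-3) in auto)
  obtain p0 where bP: "bnd P p0" using assms(5) is_pdo_bnd by auto
  obtain r0 where bR: "bnd R r0" using assms(8) is_pdo_bnd by auto
  have "(\<lambda>s m. if s = 0 then d.dl u P m else 0) = (\<lambda>_ _. 0)"
    using d.comm_eq[OF bP, of u] assms(7) by metis
  then have "d.dl u P = (\<lambda>_. 0)" by (metis (mono_tags, lifting) ext)
  then have "d.dl u R = (\<lambda>_. 0)" using d.key[OF bR assms(4)] assms(9) by simp
  then show ?thesis using d.comm_eq[OF bR, of u] by (simp add: fun_eq_iff)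
qed


end
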